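(* Let $\ell\geq k$ be positive integers, let $\lambda\in\mathcal{P}_{\rm sq}^k$ and let $\mu\in\mathcal{P}^\ell$. Then $\mu\in\mathcal{P}^\ell(\lambda)$ if and only if there exists $b\in[\ell-k+1]$ such that: (i) $\mu(b)=b+k-1$ and $\mu(b+k-1)=b$; (ii) if $1\leq i<b$ then $\mu(\mu(i))>i$; (iii) if $b+k-1<i\leq \ell$ then $\mu(\mu(i))<i$; (iv) if $\tilde\lambda\in\mathcal{P}_{\rm sq}^k$ is defined by $\tilde\lambda(i)=\mu(b+i-1)-b+1$ for $1\leq i\leq k$, then $\tilde\lambda\in\{\lambda,\tau_k(\lambda)\}$.
   Context: For a positive integer $n$, $[n]=\{1,\dots,n\}$. A partition with $n$ parts is a sequence $\lambda=(\lambda_1,\dots,\lambda_n)$ of positive integers with $\lambda_1\geq\dots\geq\lambda_n>0$. For $n,k\in\mathbb{Z}^+$, $\mathcal{P}^{n,k}$ is the set of partitions with exactly $n$ parts and $\lambda_1\leq k$; such $\lambda$ is regarded as a weakly decreasing function $[n]\to[k]$, $\lambda(i)=\lambda_i$. Set $\mathcal{P}^k=\mathcal{P}^{k,k}$ (so elements of $\mathcal{P}^k$ are decreasing maps $[k]\to[k]$ and can be composed with themselves). The map $\tau_k:\mathcal{P}^{n,k}\to\mathcal{P}^{n,k}$ is $\tau_k(\lambda_1,\dots,\lambda_n)=(k+1-\lambda_n,\dots,k+1-\lambda_1)$. Let $\mathcal{P}_{\rm sq}^k=\{\lambda\in\mathcal{P}^k:\lambda_1=k,\ \lambda_k=1\}$.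 For $\lambda\in\mathcal{P}^k$ and $\ell\geq k$, define subsets $\mathcal{P}^\ell(\lambda)\subseteq\mathcal{P}^\ell$ inductively: $\mathcal{P}^k(\lambda)=\{\lambda,\tau_k(\lambda)\}$, and for $\ell>k$, $\mathcal{P}^\ell(\lambda)=\mathcal{P}^\ell_{\rm d}(\lambda)\cup\tau_\ell(\mathcal{P}^\ell_{\rm d}(\lambda))$ where $\mathcal{P}^\ell_{\rm d}(\lambda)=\{\mu\in\mathcal{P}^\ell:(\mu_1,\dots,\mu_{\ell-1})\in\mathcal{P}^{\ell-1}(\lambda)\}$. *)

theory Defs
  imports Main
begin

text \<open>A partition with n parts and largest part at most k is encoded as a function
  nat => nat which is weakly decreasing on {1..n} with values in {1..k}, and which
  is 0 outside {1..n} (so that partitions are determined by their parts).\<close>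

definition Part :: "nat \<Rightarrow> nat \<Rightarrow> (nat \<Rightarrow> nat) set" where
  "Part n k = {lam. (\<forall>i. 1 \<le> i \<and> i \<le> n \<longrightarrow> 1 \<le> lam i \<and> lam i \<le> k)
                  \<and> (\<forall>i j. 1 \<le> i \<and> i \<le> j \<and> j \<le> n \<longrightarrow> lam j \<le> lam i)
                  \<and> (\<forall>i. i = 0 \<or> n < i \<longrightarrow> lam i = 0)}"

definition tau :: "nat \<Rightarrow> nat \<Rightarrow> (nat \<Rightarrow> nat) \<Rightarrow> (nat \<Rightarrow> nat)" where
  "tau k n lam = (\<lambda>i. if 1 \<le> i \<and> i \<le> n then k + 1 - lam (n + 1 - i) else 0)"

definition Psq :: "nat \<Rightarrow> (nat \<Rightarrow> nat) set" where
  "Psq k = {lam \<in> Part k k. lam 1 = k \<and> lam k = 1}"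

definition trunc :: "nat \<Rightarrow> (nat \<Rightarrow> nat) \<Rightarrow> (nat \<Rightarrow> nat)" where
  "trunc m mu = (\<lambda>i. if i \<le> m then mu i else 0)"

text \<open>Pgen lam k d = P^{k+d}(lam).\<close>
fun Pgen :: "(nat \<Rightarrow> nat) \<Rightarrow> nat \<Rightarrow> nat \<Rightarrow> (nat \<Rightarrow> nat) set" where
  "Pgen lam k 0 = {lam, tau k k lam}"
| "Pgen lam k (Suc d) =
     (let l = k + Suc d;
          Pd = {mu \<in> Part l l. trunc (l - 1) mu \<in> Pgen lam k d}
      in Pd \<union> tau l l ` Pd)"

definition Pell :: "(nat \<Rightarrow> nat) \<Rightarrow> nat \<Rightarrow> nat \<Rightarrow> (nat \<Rightarrow> nat) set" where
  "Pell lam k l = Pgen lam k (l - k)"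

end

theory Submission
  imports Defs
begin

lemma PartD:
  assumes "mu \<in> Part n k"
  shows "\<And>i. 1 \<le> i \<Longrightarrow> i \<le> n \<Longrightarrow> 1 \<le> mu i \<and> mu i \<le> k"
    and "\<And>i j. 1 \<le> i \<Longrightarrow> i \<le> j \<Longrightarrow> j \<le> n \<Longrightarrow> mu j \<le> mu i"
    and "\<And>i. i = 0 \<or> n < i \<Longrightarrow> mu i = 0"
proof -
  have H: "(\<forall>i. 1 \<le> i \<and> i \<le> n \<longrightarrow> 1 \<le> mu i \<and> mu i \<le> k)
        \<and> (\<forall>i j. 1 \<le> i \<and> i \<le> j \<and> j \<le> n \<longrightarrow> mu j \<le> mu i)
        \<and> (\<forall>i. i = 0 \<or> n < i \<longrightarrow> mu i = 0)" using assms unfolding Part_def by simp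
  show "\<And>i. 1 \<le> i \<Longrightarrow> i \<le> n \<Longrightarrow> 1 \<le> mu i \<and> mu i \<le> k" using H by simp
  show "\<And>i j. 1 \<le> i \<Longrightarrow> i \<le> j \<Longrightarrow> j \<le> n \<Longrightarrow> mu j \<le> mu i" using H by simp
  show "\<And>i. i = 0 \<or> n < i \<Longrightarrow> mu i = 0" using H by metis
qed

lemma tau_Part:
  assumes "mu \<in> Part n n"
  shows "tau n n mu \<in> Part n n"
proof -
  note P = PartD[OF assms]
  have a: "1 \<le> tau n n mu i \<and> tau n n mu i \<le> n" if "1 \<le> i" "i \<le> n" for i
  proof -
    have "1 \<le> mu (n+1-i) \<and> mu (n+1-i) \<le> n" using P(1)[of "n+1-i"] that by auto
    then show ?thesis using that by (auto simp: tau_def)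
  qed
  have b: "tau n n mu j \<le> tau n n mu i" if "1 \<le> i" "i \<le> j" "j \<le> n" for i j
  proof -
    have "mu (n+1-i) \<le> mu (n+1-j)" using P(2)[of "n+1-j" "n+1-i"] that by auto
    moreover have "mu (n+1-j) \<le> n" using P(1)[of "n+1-j"] that by auto
    ultimately show ?thesis using that by (auto simp: tau_def)
  qed
  have c: "tau n n mu i = 0" if "i = 0 \<or> n < i" for i
    using that by (auto simp: tau_def)
  show ?thesis unfolding Part_def mem_Collect_eq using a b c by simp
qed

lemma tau_tau:
  assumes "mu \<in> Part n n"
  shows "tau n n (tau n n mu) = mu"
proof
  fix i
  note P = PartD[OF assms]
  show "tau n n (tau n n mu) i = mu i"
  proof (cases "1 \<le> i \<and> i \<le> n")
    case True
    then have "n + 1 - (n + 1 - i) = i" by auto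
    then show ?thesis using True P(1)[of i] by (auto simp: tau_def)
  next
    case False
    then show ?thesis using P(3)[of i] by (auto simp: tau_def)
  qed
qed

lemma Pgen_Part:
  assumes "lam \<in> Part k k"
  shows "Pgen lam k d \<subseteq> Part (k+d) (k+d)"
proof (induction d)
  case 0
  then show ?case using assms tau_Part by auto
next
  case (Suc d)
  then show ?case using tau_Part by (auto simp: Let_def)
qed


definition Q :: "nat \<Rightarrow> nat \<Rightarrow> (nat \<Rightarrow> nat) \<Rightarrow> (nat \<Rightarrow> nat) \<Rightarrow> nat \<Rightarrow> bool" where
  "Q k l lam mu b \<longleftrightarrow> b \<in> {1..l - k + 1} \<and>
        mu b = b + k - 1 \<and> mu (b + k - 1) = b
      \<and> (\<forall>i. 1 \<le> i \<and> i < b \<longrightarrow> mu (mu i) > i)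
      \<and> (\<forall>i. b + k - 1 < i \<and> i \<le> l \<longrightarrow> mu (mu i) < i)
      \<and> (\<lambda>i. if 1 \<le> i \<and> i \<le> k then mu (b + i - 1) - b + 1 else 0) \<in> {lam, tau k k lam}"

lemma Q_tau:
  assumes mP: "mu \<in> Part l l" and q: "Q k l lam mu b" and lP: "lam \<in> Part k k"
    and k1: "1 \<le> k" and kl: "k \<le> l"
  shows "Q k l lam (tau l l mu) (l + 2 - k - b)"
proof -
  note P = PartD[OF mP]
  define m where "m = tau l l mu"
  define b' where "b' = l + 2 - k - b"
  have b1: "1 \<le> b" and bl: "b + k - 1 \<le> l" using q kl k1 unfolding Q_def by auto
  have i1: "mu b = b + k - 1" and i2: "mu (b + k - 1) = b"
    and ii: "\<And>i. 1 \<le> i \<Longrightarrow> i < b \<Longrightarrow> mu (mu i) > i"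
    and iii: "\<And>i. b + k - 1 < i \<Longrightarrow> i \<le> l \<Longrightarrow> mu (mu i) < i"
    and iv: "(\<lambda>i. if 1 \<le> i \<and> i \<le> k then mu (b + i - 1) - b + 1 else 0) \<in> {lam, tau k k lam}"
    using q unfolding Q_def by auto
  have mt: "m i = l + 1 - mu (l + 1 - i)" if "1 \<le> i" "i \<le> l" for i
    using that by (simp add: m_def tau_def)
  have b'1: "1 \<le> b'" and b'l: "b' \<le> l - k + 1" and b'k: "b' + k - 1 = l + 1 - b"
    using b1 bl k1 by (auto simp: b'_def)
  have r1: "m b' = b' + k - 1"
  proof -
    have "l + 1 - b' = b + k - 1" using b1 bl k1 by (auto simp: b'_def)
    then show ?thesis using mt[of b'] b'1 b'l b'k i2 k1 kl by auto
  qed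
  have r2: "m (b' + k - 1) = b'"
  proof -
    have "l + 1 - (b' + k - 1) = b" using b'k b1 bl by auto
    then have "m (b' + k - 1) = l + 1 - mu b" using mt[of "b'+k-1"] b'k b1 bl k1 by auto
    then show ?thesis using i1 b1 bl k1 by (auto simp: b'_def)
  qed
  have r3: "m (m i) > i" if "1 \<le> i" "i < b'" for i
  proof -
    define j where "j = l + 1 - i"
    have j1: "b + k - 1 < j" "j \<le> l" using that b'k k1 b1 bl unfolding j_def by auto
    have mj: "1 \<le> mu j \<and> mu j \<le> l" using P(1)[of j] j1 by auto
    have mi: "m i = l + 1 - mu j" using mt[of i] that b'l unfolding j_def by auto
    have "m (m i) = l + 1 - mu (mu j)" using mt[of "m i"] mi mj by auto
    moreover have "mu (mu j) < j" using iii j1 by auto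
    ultimately show ?thesis using j1 unfolding j_def by auto
  qed
  have r4: "m (m i) < i" if "b' + k - 1 < i" "i \<le> l" for i
  proof -
    define j where "j = l + 1 - i"
    have j1: "1 \<le> j" "j < b" using that b'k k1 b1 bl unfolding j_def by auto
    have mj: "1 \<le> mu j \<and> mu j \<le> l" using P(1)[of j] j1 bl by auto
    have mi: "m i = l + 1 - mu j" using mt[of i] that b'k by (auto simp: j_def)
    have "m (m i) = l + 1 - mu (mu j)" using mt[of "m i"] mi mj by auto
    moreover have "mu (mu j) > j" using ii j1 by auto
    moreover have "mu (mu j) \<le> l" using P(1)[of "mu j"] mj by auto
    ultimately show ?thesis using j1 that unfolding j_def by linarith
  qed
  define t where "t = (\<lambda>i. if 1 \<le> i \<and> i \<le> k then mu (b + i - 1) - b + 1 else 0)"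
  have teq: "(\<lambda>i. if 1 \<le> i \<and> i \<le> k then m (b' + i - 1) - b' + 1 else 0) = tau k k t"
  proof
    fix i
    show "(if 1 \<le> i \<and> i \<le> k then m (b' + i - 1) - b' + 1 else 0) = tau k k t i"
    proof (cases "1 \<le> i \<and> i \<le> k")
      case True
      define x where "x = mu (b + k - i)"
      have x1: "b \<le> x" using P(2)[of "b+k-i" "b+k-1"] True b1 bl unfolding x_def i2 by auto
      have x2: "x \<le> b + k - 1" using P(2)[of "b" "b+k-i"] True b1 bl unfolding x_def i1 by auto
      have e1: "l + 1 - (b' + i - 1) = b + k - i" using True b'k b1 bl by auto
      have "m (b' + i - 1) = l + 1 - x" using mt[of "b'+i-1"] True b'1 b'k bl b1 e1 unfolding x_def by auto
      then have L: "m (b' + i - 1) - b' + 1 = k + b - x" using x1 x2 bl b1 k1 by (auto simp: b'_def)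
      have e2: "b + (k + 1 - i) - 1 = b + k - i" using True by auto
      have "t (k + 1 - i) = x - b + 1" using True e2 unfolding t_def x_def by auto
      then have "tau k k t i = k + b - x" using True x1 x2 by (auto simp: tau_def)
      then show ?thesis using True L by auto
    qed (auto simp: tau_def)
  qed
  have tP: "tau k k lam \<in> Part k k" using tau_Part[OF lP] .
  have tt: "tau k k (tau k k lam) = lam" using tau_tau[OF lP] .
  have "tau k k t \<in> {lam, tau k k lam}" using iv tt unfolding t_def by auto
  then show ?thesis unfolding Q_def m_def[symmetric] b'_def[symmetric] using teq b'1 b'l r1 r2 r3 r4
    by auto
qed


lemma tilde_trunc:
  assumes "b + k - 1 \<le> n"
  shows "(\<lambda>i. if 1 \<le> i \<and> i \<le> k then trunc n mu (b + i - 1) - b + 1 else 0)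
       = (\<lambda>i. if 1 \<le> i \<and> i \<le> k then mu (b + i - 1) - b + 1 else 0)"
proof
  fix i show "(if 1 \<le> i \<and> i \<le> k then trunc n mu (b + i - 1) - b + 1 else 0)
       = (if 1 \<le> i \<and> i \<le> k then mu (b + i - 1) - b + 1 else 0)"
    using assms by (auto simp: trunc_def)
qed

lemma ext_Q:
  assumes mP: "mu \<in> Part (Suc n) (Suc n)" and nP: "trunc n mu \<in> Part n n"
    and q: "Q k n lam (trunc n mu) b" and k1: "1 \<le> k" and kn: "k \<le> n"
  shows "Q k (Suc n) lam mu b"
proof -
  define v where "v = trunc n mu"
  note P = PartD[OF mP]
  note V = PartD[OF nP[folded v_def]]
  have vm: "v i = mu i" if "i \<le> n" for i using that by (simp add: v_def trunc_def)
  have b1: "1 \<le> b" and bl: "b + k - 1 \<le> n" and bl2: "b \<le> n - k + 1" using q k1 kn unfolding Q_def v_def by auto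
  have i1: "v b = b + k - 1" and i2: "v (b + k - 1) = b"
    and ii: "\<And>i. 1 \<le> i \<Longrightarrow> i < b \<Longrightarrow> v (v i) > i"
    and iii: "\<And>i. b + k - 1 < i \<Longrightarrow> i \<le> n \<Longrightarrow> v (v i) < i"
    and iv: "(\<lambda>i. if 1 \<le> i \<and> i \<le> k then v (b + i - 1) - b + 1 else 0) \<in> {lam, tau k k lam}"
    using q unfolding Q_def v_def by auto
  have r1: "mu b = b + k - 1" using i1 vm[of b] bl k1 by auto
  have r2: "mu (b + k - 1) = b" using i2 vm[of "b+k-1"] bl by auto
  have r3: "mu (mu i) > i" if "1 \<le> i" "i < b" for i
  proof -
    have "v i = mu i" using vm[of i] that bl by auto
    moreover have "1 \<le> v i \<and> v i \<le> n" using V(1)[of i] that bl by auto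
    ultimately have "v (v i) = mu (mu i)" using vm[of "v i"] by auto
    then show ?thesis using ii[OF that] by simp
  qed
  have r4: "mu (mu i) < i" if "b + k - 1 < i" "i \<le> Suc n" for i
  proof (cases "i \<le> n")
    case True
    have "v i = mu i" using vm[of i] True by auto
    moreover have "1 \<le> v i \<and> v i \<le> n" using V(1)[of i] that True by auto
    ultimately have "v (v i) = mu (mu i)" using vm[of "v i"] by auto
    then show ?thesis using iii[of i] that True by simp
  next
    case False
    then have iS: "i = Suc n" using that by auto
    have "mu i \<le> mu (b + k - 1)" using P(2)[of "b+k-1" i] that b1 k1 by auto
    then have "mu i \<le> n" using r2 bl b1 k1 by auto
    moreover have "1 \<le> mu i" using P(1)[of i] iS by auto
    ultimately have "mu (mu i) = v (mu i)" using vm by auto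
    moreover have "v (mu i) \<le> n" using V(1)[of "mu i"] \<open>mu i \<le> n\<close> \<open>1 \<le> mu i\<close> by auto
    ultimately show ?thesis using iS by auto
  qed
  have iv': "(\<lambda>i. if 1 \<le> i \<and> i \<le> k then mu (b + i - 1) - b + 1 else 0) \<in> {lam, tau k k lam}"
    using iv tilde_trunc[OF bl, of mu] unfolding v_def by simp
  show ?thesis unfolding Q_def using b1 bl2 r1 r2 r3 r4 iv' by auto
qed

lemma restr_Q:
  assumes mP: "mu \<in> Part (Suc n) (Suc n)" and q: "Q k (Suc n) lam mu b"
    and m1: "mu 1 < Suc n" and bl: "b + k - 1 < Suc n" and k1: "1 \<le> k"
  shows "trunc n mu \<in> Part n n \<and> Q k n lam (trunc n mu) b"
proof -
  define v where "v = trunc n mu"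
  note P = PartD[OF mP]
  have vm: "v i = mu i" if "i \<le> n" for i using that by (simp add: v_def trunc_def)
  have vP1: "1 \<le> v i \<and> v i \<le> n" if "1 \<le> i" "i \<le> n" for i
  proof -
    have "mu i \<le> mu 1" using P(2)[of 1 i] that by auto
    then show ?thesis using P(1)[of i] that m1 vm[of i] by auto
  qed
  have vP2: "v j \<le> v i" if "1 \<le> i" "i \<le> j" "j \<le> n" for i j
    using P(2)[of i j] that vm by auto
  have vP3: "v i = 0" if "i = 0 \<or> n < i" for i
    using that P(3)[of 0] by (auto simp: v_def trunc_def)
  have vP: "v \<in> Part n n" unfolding Part_def mem_Collect_eq using vP1 vP2 vP3 by simp
  have b1: "1 \<le> b" using q unfolding Q_def by auto
  have i1: "mu b = b + k - 1" and i2: "mu (b + k - 1) = b"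
    and ii: "\<And>i. 1 \<le> i \<Longrightarrow> i < b \<Longrightarrow> mu (mu i) > i"
    and iii: "\<And>i. b + k - 1 < i \<Longrightarrow> i \<le> Suc n \<Longrightarrow> mu (mu i) < i"
    and iv: "(\<lambda>i. if 1 \<le> i \<and> i \<le> k then mu (b + i - 1) - b + 1 else 0) \<in> {lam, tau k k lam}"
    using q unfolding Q_def by auto
  have bn: "b + k - 1 \<le> n" using bl by auto
  have r1: "v b = b + k - 1" using i1 vm[of b] bn k1 by auto
  have r2: "v (b + k - 1) = b" using i2 vm[of "b+k-1"] bn by auto
  have r3: "v (v i) > i" if "1 \<le> i" "i < b" for i
  proof -
    have "v i = mu i" using vm[of i] that bn by auto
    moreover have "1 \<le> v i \<and> v i \<le> n" using vP1[of i] that bn by auto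
    ultimately have "v (v i) = mu (mu i)" using vm[of "v i"] by auto
    then show ?thesis using ii[OF that] by simp
  qed
  have r4: "v (v i) < i" if "b + k - 1 < i" "i \<le> n" for i
  proof -
    have "v i = mu i" using vm[of i] that by auto
    moreover have "1 \<le> v i \<and> v i \<le> n" using vP1[of i] that by auto
    ultimately have "v (v i) = mu (mu i)" using vm[of "v i"] by auto
    then show ?thesis using iii[of i] that by simp
  qed
  have iv': "(\<lambda>i. if 1 \<le> i \<and> i \<le> k then v (b + i - 1) - b + 1 else 0) \<in> {lam, tau k k lam}"
    using iv tilde_trunc[OF bn, of mu] unfolding v_def by simp
  have "Q k n lam v b" unfolding Q_def using b1 bn r1 r2 r3 r4 iv' by auto
  then show ?thesis using vP unfolding v_def by auto
qed

lemma split_Q: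
  assumes mP: "mu \<in> Part (Suc n) (Suc n)" and q: "Q k (Suc n) lam mu b"
    and k1: "1 \<le> k" and kn: "k \<le> n"
  shows "(mu 1 < Suc n \<and> b + k - 1 < Suc n) \<or> (mu (Suc n) > 1 \<and> b > 1)"
proof -
  note P = PartD[OF mP]
  have b1: "1 \<le> b" and bl: "b + k - 1 \<le> Suc n" using q k1 kn unfolding Q_def by auto
  have i1: "mu b = b + k - 1" and i2: "mu (b + k - 1) = b"
    and ii: "\<And>i. 1 \<le> i \<Longrightarrow> i < b \<Longrightarrow> mu (mu i) > i"
    using q unfolding Q_def by auto
  have m1: "mu 1 \<le> Suc n" using P(1)[of 1] by auto
  show ?thesis
  proof (cases "mu 1 < Suc n \<and> b + k - 1 < Suc n")
    case True then show ?thesis by auto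
  next
    case False
    show ?thesis
    proof (cases "mu 1 = Suc n")
      case True
      have "b \<noteq> 1" using True i1 kn by auto
      then have bg: "b > 1" using b1 by auto
      have "mu (mu 1) > 1" using ii[of 1] bg by auto
      then show ?thesis using True bg by auto
    next
      case F2: False
      then have e: "b + k - 1 = Suc n" using False m1 bl by auto
      then have "b > 1" using kn by auto
      then show ?thesis using i2 e by auto
    qed
  qed
qed


lemma tilde1:
  assumes "mu \<in> Part n n"
  shows "(\<lambda>i. if 1 \<le> i \<and> i \<le> n then mu (1 + i - 1) - 1 + 1 else 0) = mu"
proof
  fix i
  note P = PartD[OF assms]
  show "(if 1 \<le> i \<and> i \<le> n then mu (1 + i - 1) - 1 + 1 else 0) = mu i"
    using P(1)[of i] P(3)[of i] by auto
qed

lemma Q_base: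
  assumes lP: "lam \<in> Psq k" and k1: "1 \<le> k"
  shows "Q k k lam lam 1"
proof -
  have lP': "lam \<in> Part k k" and l1: "lam 1 = k" and lk: "lam k = 1" using lP unfolding Psq_def by auto
  note P = PartD[OF lP']
  have "\<not> (1 + k - 1 < i \<and> i \<le> k)" for i by auto
  moreover have "(\<lambda>i. if 1 \<le> i \<and> i \<le> k then lam (1 + i - 1) - 1 + 1 else 0) = lam"
    using tilde1[OF lP'] .
  ultimately show ?thesis unfolding Q_def using l1 lk k1 by auto
qed

lemma main:
  assumes lP: "lam \<in> Psq k" and k1: "1 \<le> k"
  shows "mu \<in> Part (k+d) (k+d) \<Longrightarrow> mu \<in> Pgen lam k d \<longleftrightarrow> (\<exists>b. Q k (k+d) lam mu b)"
proof (induction d arbitrary: mu)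
  have lP': "lam \<in> Part k k" using lP unfolding Psq_def by auto
  case 0
  then have mP: "mu \<in> Part k k" by simp
  show ?case
  proof
    assume "mu \<in> Pgen lam k 0"
    then have "mu = lam \<or> mu = tau k k lam" by simp
    then show "\<exists>b. Q k (k+0) lam mu b"
    proof
      assume "mu = lam" then show ?thesis using Q_base[OF lP k1] by auto
    next
      assume "mu = tau k k lam"
      moreover have "Q k k lam (tau k k lam) (k + 2 - k - 1)"
        using Q_tau[OF lP' Q_base[OF lP k1] lP' k1] by simp
      ultimately show ?thesis by auto
    qed
  next
    assume "\<exists>b. Q k (k+0) lam mu b"
    then obtain b where q: "Q k k lam mu b" by auto
    then have b1: "b = 1" unfolding Q_def by auto
    have "(\<lambda>i. if 1 \<le> i \<and> i \<le> k then mu (b + i - 1) - b + 1 else 0) \<in> {lam, tau k k lam}"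
      using q unfolding Q_def by blast
    then have "(\<lambda>i. if 1 \<le> i \<and> i \<le> k then mu (1 + i - 1) - 1 + 1 else 0) \<in> {lam, tau k k lam}"
      unfolding b1 .
    then have "mu \<in> {lam, tau k k lam}" using tilde1[OF mP] by simp
    then show "mu \<in> Pgen lam k 0" by simp
  qed
next
  case (Suc d)
  have lP': "lam \<in> Part k k" using lP unfolding Psq_def by auto
  define n where "n = k + d"
  have kS: "k + Suc d = Suc n" by (simp add: n_def)
  have kn: "k \<le> n" by (simp add: n_def)
  define Pd where "Pd = {mu \<in> Part (Suc n) (Suc n). trunc n mu \<in> Pgen lam k d}"
  have Pg: "Pgen lam k (Suc d) = Pd \<union> tau (Suc n) (Suc n) ` Pd"
    by (simp add: Let_def Pd_def n_def)
  have mP: "mu \<in> Part (Suc n) (Suc n)" using Suc.prems kS by simp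
  have fwd: "\<exists>b. Q k (Suc n) lam m b" if "m \<in> Pd" for m
  proof -
    have mP': "m \<in> Part (Suc n) (Suc n)" and tg: "trunc n m \<in> Pgen lam k d"
      using that unfolding Pd_def by auto
    have tP: "trunc n m \<in> Part n n" using Pgen_Part[OF lP', of d] tg by (auto simp: n_def)
    obtain b where "Q k n lam (trunc n m) b" using Suc.IH[of "trunc n m"] tP tg by (auto simp: n_def)
    then show ?thesis using ext_Q[OF mP' tP _ k1 kn] by blast
  qed
  have bwd: "m \<in> Pd" if mP': "m \<in> Part (Suc n) (Suc n)" and q: "Q k (Suc n) lam m b"
    and m1: "m 1 < Suc n" and bl: "b + k - 1 < Suc n" for m b
  proof -
    have "trunc n m \<in> Part n n \<and> Q k n lam (trunc n m) b" using restr_Q[OF mP' q m1 bl k1] .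
    then have "trunc n m \<in> Pgen lam k d" using Suc.IH[of "trunc n m"] by (auto simp: n_def)
    then show ?thesis using mP' unfolding Pd_def by auto
  qed
  show ?case unfolding kS Pg
  proof
    assume "mu \<in> Pd \<union> tau (Suc n) (Suc n) ` Pd"
    then show "\<exists>b. Q k (Suc n) lam mu b"
    proof
      assume "mu \<in> Pd" then show ?thesis using fwd by auto
    next
      assume "mu \<in> tau (Suc n) (Suc n) ` Pd"
      then obtain m where m: "m \<in> Pd" and me: "mu = tau (Suc n) (Suc n) m" by auto
      obtain b where q: "Q k (Suc n) lam m b" using fwd[OF m] by auto
      have "m \<in> Part (Suc n) (Suc n)" using m unfolding Pd_def by auto
      then have "Q k (Suc n) lam mu (Suc n + 2 - k - b)" using Q_tau[OF _ q lP' k1] kn me by auto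
      then show ?thesis by auto
    qed
  next
    assume "\<exists>b. Q k (Suc n) lam mu b"
    then obtain b where q: "Q k (Suc n) lam mu b" by auto
    have "(mu 1 < Suc n \<and> b + k - 1 < Suc n) \<or> (mu (Suc n) > 1 \<and> b > 1)"
      using split_Q[OF mP q k1 kn] .
    then show "mu \<in> Pd \<union> tau (Suc n) (Suc n) ` Pd"
    proof
      assume "mu 1 < Suc n \<and> b + k - 1 < Suc n"
      then show ?thesis using bwd[OF mP q] by auto
    next
      assume h: "mu (Suc n) > 1 \<and> b > 1"
      define m where "m = tau (Suc n) (Suc n) mu"
      define b' where "b' = Suc n + 2 - k - b"
      have mP': "m \<in> Part (Suc n) (Suc n)" using tau_Part[OF mP] unfolding m_def .
      have q': "Q k (Suc n) lam m b'" using Q_tau[OF mP q lP' k1] kn unfolding m_def b'_def by auto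
      have bl: "b + k - 1 \<le> Suc n" using q k1 kn unfolding Q_def by auto
      have "m 1 = Suc n + 1 - mu (Suc n)" by (simp add: m_def tau_def)
      then have m1: "m 1 < Suc n" using h by arith
      have "b' + k - 1 < Suc n" using h bl k1 unfolding b'_def by auto
      then have "m \<in> Pd" using bwd[OF mP' q' m1] by auto
      moreover have "mu = tau (Suc n) (Suc n) m" using tau_tau[OF mP] unfolding m_def by simp
      ultimately show ?thesis by auto
    qed
  qed
qed

theorem theorem3p1:
  fixes k l :: nat and lam mu :: "nat \<Rightarrow> nat"
  assumes "1 \<le> k" and "k \<le> l"
    and "lam \<in> Psq k" and "mu \<in> Part l l"
  shows "mu \<in> Pell lam k l \<longleftrightarrow>
    (\<exists>b \<in> {1..l - k + 1}.
        mu b = b + k - 1 \<and> mu (b + k - 1) = b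
      \<and> (\<forall>i. 1 \<le> i \<and> i < b \<longrightarrow> mu (mu i) > i)
      \<and> (\<forall>i. b + k - 1 < i \<and> i \<le> l \<longrightarrow> mu (mu i) < i)
      \<and> (\<lambda>i. if 1 \<le> i \<and> i \<le> k then mu (b + i - 1) - b + 1 else 0) \<in> {lam, tau k k lam})"
proof -
  have e: "k + (l - k) = l" using assms(2) by simp
  have A: "mu \<in> Pell lam k l \<longleftrightarrow> (\<exists>b. Q k l lam mu b)"
    using main[OF assms(3) assms(1), of mu "l - k"] assms(4) unfolding Pell_def e by simp
  show ?thesis unfolding A Q_def Bex_def by blast
qed

end
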